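(* Let $d\ge2$, $L\ge1$, $\sigma>0$, $\lambda>0$, $\gamma>0$, let $\mu_0^\star,\mu_1^\star\in\mathbb{S}^{d-1}$ be orthonormal, and let the rows of $\mathbb{X}$ be i.i.d. with law $\frac12\mathcal{N}(\mu_0^\star,\sigma^2I_d)+\frac12\mathcal{N}(\mu_1^\star,\sigma^2I_d)$. The manifold $\mathcal{M}$ is invariant under the projected gradient descent iteration: if $(\mu_0^k,\mu_1^k)\in\mathcal{M}$, then $(\mu_0^{k+1},\mu_1^{k+1})\in\mathcal{M}$.
   Context: $T^{\mathrm{lin},\mu_0,\mu_1}(\mathbb{X})_\ell=\frac{2}{L}\sum_{k=1}^L\lambda X_\ell^\top(\mu_0\mu_0^\top+\mu_1\mu_1^\top)X_kX_k$; $\mathcal{R}(\mu_0,\mu_1)=\frac1L\sum_\ell\mathbb{E}\|X_\ell-T^{\mathrm{lin},\mu_0,\mu_1}(\mathbb{X})_\ell\|_2^2$ (a smooth function on $\mathbb{R}^d\times\mathbb{R}^d$ with Euclidean gradients $\nabla_{\mu_0}\mathcal{R},\nabla_{\mu_1}\mathcal{R}$). The iteration is, for $i\in\{0,1\}$, $\mu_i^{k+1}=\dfrac{\mu_i^k-\gamma(I_d-\mu_i^k(\mu_i^k)^\top)\nabla_{\mu_i}\mathcal{R}(\mu_0^k,\mu_1^k)}{\|\mu_i^k-\gamma(I_d-\mu_i^k(\mu_i^k)^\top)\nabla_{\mu_i}\mathcal{R}(\mu_0^k,\mu_1^k)\|_2}$. $\mathcal{M}=\{(\mu_0,\mu_1)\in(\mathbb{S}^{d-1})^2:\langle\mu_1^\star,\mu_0\rangle=0,\langle\mu_0^\star,\mu_1\rangle=0,\langle\mu_0,\mu_1\rangle=0\}$.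 *)

theory Defs
  imports "HOL-Probability.Probability"
begin

definition gauss_iso_density :: "real^'d \<Rightarrow> real \<Rightarrow> real^'d \<Rightarrow> real" where
  "gauss_iso_density mu sg x = (\<Prod>i\<in>UNIV. normal_density (mu $ i) sg (x $ i))"

definition mixture_law :: "real^'d \<Rightarrow> real^'d \<Rightarrow> real \<Rightarrow> (real^'d) measure" where
  "mixture_law ms0 ms1 sg = density lborel
     (\<lambda>x. ennreal (1/2 * gauss_iso_density ms0 sg x + 1/2 * gauss_iso_density ms1 sg x))"

definition data_law :: "nat \<Rightarrow> real^'d \<Rightarrow> real^'d \<Rightarrow> real \<Rightarrow> (nat \<Rightarrow> real^'d) measure" where
  "data_law L ms0 ms1 sg = PiM {..<L} (\<lambda>_. mixture_law ms0 ms1 sg)"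

definition T_lin :: "nat \<Rightarrow> real \<Rightarrow> real^'d \<Rightarrow> real^'d \<Rightarrow> (nat \<Rightarrow> real^'d) \<Rightarrow> nat \<Rightarrow> real^'d" where
  "T_lin L lam mu0 mu1 X l = (2 / real L) *\<^sub>R (\<Sum>k<L.
      (lam * ((X l \<bullet> mu0) * (mu0 \<bullet> X k) + (X l \<bullet> mu1) * (mu1 \<bullet> X k))) *\<^sub>R X k)"

definition risk :: "nat \<Rightarrow> real \<Rightarrow> real \<Rightarrow> real^'d \<Rightarrow> real^'d \<Rightarrow> real^'d \<Rightarrow> real^'d \<Rightarrow> real" where
  "risk L sg lam ms0 ms1 mu0 mu1 = (1 / real L) * (\<Sum>l<L.
      integral\<^sup>L (data_law L ms0 ms1 sg) (\<lambda>X. (norm (X l - T_lin L lam mu0 mu1 X l))\<^sup>2))"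

definition grad0 :: "nat \<Rightarrow> real \<Rightarrow> real \<Rightarrow> real^'d \<Rightarrow> real^'d \<Rightarrow> real^'d \<Rightarrow> real^'d \<Rightarrow> real^'d" where
  "grad0 L sg lam ms0 ms1 mu0 mu1 =
     (THE g. ((\<lambda>m. risk L sg lam ms0 ms1 m mu1) has_derivative (\<lambda>h. g \<bullet> h)) (at mu0))"

definition grad1 :: "nat \<Rightarrow> real \<Rightarrow> real \<Rightarrow> real^'d \<Rightarrow> real^'d \<Rightarrow> real^'d \<Rightarrow> real^'d \<Rightarrow> real^'d" where
  "grad1 L sg lam ms0 ms1 mu0 mu1 =
     (THE g. ((\<lambda>m. risk L sg lam ms0 ms1 mu0 m) has_derivative (\<lambda>h. g \<bullet> h)) (at mu1))"

definition sphere_step :: "real \<Rightarrow> real^'d \<Rightarrow> real^'d \<Rightarrow> real^'d" where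
  "sphere_step gamma mu g =
     (let v = mu - gamma *\<^sub>R (g - (mu \<bullet> g) *\<^sub>R mu) in (1 / norm v) *\<^sub>R v)"

definition pgd_step :: "nat \<Rightarrow> real \<Rightarrow> real \<Rightarrow> real \<Rightarrow> real^'d \<Rightarrow> real^'d
    \<Rightarrow> (real^'d) \<times> (real^'d) \<Rightarrow> (real^'d) \<times> (real^'d)" where
  "pgd_step L sg lam gamma ms0 ms1 p =
     (sphere_step gamma (fst p) (grad0 L sg lam ms0 ms1 (fst p) (snd p)),
      sphere_step gamma (snd p) (grad1 L sg lam ms0 ms1 (fst p) (snd p)))"

definition manifoldM :: "real^'d \<Rightarrow> real^'d \<Rightarrow> ((real^'d) \<times> (real^'d)) set" where
  "manifoldM ms0 ms1 = {(mu0, mu1). norm mu0 = 1 \<and> norm mu1 = 1 \<and>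
      ms1 \<bullet> mu0 = 0 \<and> ms0 \<bullet> mu1 = 0 \<and> mu0 \<bullet> mu1 = 0}"

end

theory Submission
  imports Defs
begin


typedef 'a wo = "UNIV :: 'a set" by auto

instance wo :: (finite) finite
proof
  have "(UNIV :: 'a wo set) = Abs_wo ` UNIV"
    using type_definition.Abs_image[OF type_definition_wo] by (metis surj_def) 
  then show "finite (UNIV :: 'a wo set)" by (metis finite_imageI finite)
qed

instantiation wo :: (finite) wellorder
begin
definition less_eq_wo :: "'a wo \<Rightarrow> 'a wo \<Rightarrow> bool" where
  "less_eq_wo x y \<longleftrightarrow> to_nat (Rep_wo x) \<le> to_nat (Rep_wo y)"
definition less_wo :: "'a wo \<Rightarrow> 'a wo \<Rightarrow> bool" where
  "less_wo x y \<longleftrightarrow> to_nat (Rep_wo x) < to_nat (Rep_wo y)"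
instance
proof
  fix x y z :: "'a wo"
  show "(x < y) = (x \<le> y \<and> \<not> y \<le> x)" by (auto simp: less_eq_wo_def less_wo_def)
  show "x \<le> x" by (simp add: less_eq_wo_def)
  show "x \<le> y \<Longrightarrow> y \<le> z \<Longrightarrow> x \<le> z" by (simp add: less_eq_wo_def)
  show "x \<le> y \<Longrightarrow> y \<le> x \<Longrightarrow> x = y"
    by (simp add: less_eq_wo_def Rep_wo_inject)
  show "x \<le> y \<or> y \<le> x" by (auto simp: less_eq_wo_def)
next
  fix P :: "'a wo \<Rightarrow> bool" and a :: "'a wo"
  assume H: "\<And>x. (\<And>y. y < x \<Longrightarrow> P y) \<Longrightarrow> P x"
  show "P a"
    by (induction a rule: measure_induct_rule[where f="\<lambda>x. to_nat (Rep_wo x)"])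
       (rule H, simp add: less_wo_def)
qed
end

lemma lborel_orth_wo:
  fixes f :: "real^'n::{finite,wellorder} \<Rightarrow> real^'n::_"
  assumes f: "orthogonal_transformation f"
  shows "distr lborel borel f = lborel"
proof -
  have lin: "linear f" using f orthogonal_transformation_linear by blast
  have [measurable]: "f \<in> borel_measurable borel"
    by (intro borel_measurable_continuous_onI linear_continuous_on linear_conv_bounded_linear[THEN iffD1] lin)
  obtain g where g: "orthogonal_transformation g" "\<And>x. f (g x) = x" "\<And>x. g (f x) = x"
    using orthogonal_transformation_inv[OF f] f
    by (metis orthogonal_transformation_bij bij_inv_eq_iff)
  show ?thesis
  proof (rule lborel_eqI[symmetric])
    fix l u :: "real^'n::{finite,wellorder}"
    assume "\<And>b. b \<in> Basis \<Longrightarrow> l \<bullet> b \<le> u \<bullet> b"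
    have pre: "f -` box l u = g ` box l u"
      using g by (auto simp: image_iff) (metis g(3))
    have "emeasure (distr lborel borel f) (box l u) = emeasure lborel (f -` box l u)"
      by (simp add: emeasure_distr)
    also have "\<dots> = emeasure lebesgue (g ` box l u)"
    proof -
      have S: "f -` box l u \<in> sets lborel"
        using measurable_sets_borel[OF \<open>f \<in> borel_measurable borel\<close>] by simp
      then show ?thesis unfolding pre[symmetric] by simp
    qed
    also have "\<dots> = measure lebesgue (g ` box l u)"
      by (rule emeasure_eq_measure2) (simp add: measurable_orthogonal_image g(1))
    also have "\<dots> = measure lebesgue (box l u)"
      by (simp add: measure_orthogonal_image g(1))
    also have "\<dots> = emeasure lebesgue (box l u)"
      by (rule emeasure_eq_measure2[symmetric]) simp
    also have "\<dots> = emeasure lborel (box l u)"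
      by (simp add: emeasure_completion)
    finally show "emeasure (distr lborel borel f) (box l u) = (\<Prod>b\<in>Basis. (u - l) \<bullet> b)"
      using \<open>\<And>b. b \<in> Basis \<Longrightarrow> l \<bullet> b \<le> u \<bullet> b\<close> by simp
  qed simp
qed

lemma linear_borel_measurable:
  fixes f :: "'u::euclidean_space \<Rightarrow> 'v::euclidean_space"
  assumes "linear f" shows "f \<in> borel_measurable borel"
  by (intro borel_measurable_continuous_onI linear_continuous_on linear_conv_bounded_linear[THEN iffD1] assms)

lemma Basis_vec_axis: "(Basis :: (real^'n) set) = range (\<lambda>i. axis i 1)"
  by (auto simp: Basis_vec_def)

lemma prod_Basis_vec: "(\<Prod>b\<in>(Basis :: (real^'n) set). f b) = (\<Prod>i\<in>UNIV. f (axis i 1))"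
  unfolding Basis_vec_axis by (subst prod.reindex) (auto simp: inj_on_def axis_eq_axis)

lemma sum_Basis_vec: "(\<Sum>b\<in>(Basis :: (real^'n) set). f b) = (\<Sum>i\<in>UNIV. f (axis i 1))"
  unfolding Basis_vec_axis by (subst sum.reindex) (auto simp: inj_on_def axis_eq_axis)

definition J_wo :: "real^'b \<Rightarrow> real^('b wo)" where "J_wo x = (\<chi> i. x $ Rep_wo i)"
definition J_wo' :: "real^('b wo) \<Rightarrow> real^'b" where "J_wo' y = (\<chi> j. y $ Abs_wo j)"

lemma J_wo_inv[simp]: "J_wo' (J_wo x) = x" "J_wo (J_wo' y) = y"
  by (simp_all add: J_wo_def J_wo'_def vec_eq_iff Abs_wo_inverse Rep_wo_inverse)

lemma linear_J_wo: "linear J_wo" "linear J_wo'"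
  by (auto intro!: linearI simp: J_wo_def J_wo'_def vec_eq_iff)

lemma sum_wo: "(\<Sum>i\<in>UNIV. f (Rep_wo i)) = (\<Sum>j\<in>(UNIV::'b::finite set). f j)"
proof -
  have "(\<Sum>j\<in>(UNIV::'b set). f j) = (\<Sum>j\<in>Rep_wo ` UNIV. f j)"
    by (metis type_definition.Rep_range type_definition_wo)
  also have "\<dots> = (\<Sum>i\<in>UNIV. f (Rep_wo i))"
    by (subst sum.reindex) (simp_all add: inj_on_def Rep_wo_inject)
  finally show ?thesis by simp
qed

lemma prod_wo: "(\<Prod>i\<in>UNIV. f (Rep_wo i)) = (\<Prod>j\<in>(UNIV::'b::finite set). f j)"
proof -
  have "(\<Prod>j\<in>(UNIV::'b set). f j) = (\<Prod>j\<in>Rep_wo ` UNIV. f j)"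
    by (metis type_definition.Rep_range type_definition_wo)
  also have "\<dots> = (\<Prod>i\<in>UNIV. f (Rep_wo i))"
    by (subst prod.reindex) (simp_all add: inj_on_def Rep_wo_inject)
  finally show ?thesis by simp
qed

lemma inner_J_wo: "J_wo x \<bullet> J_wo (y::real^'b::finite) = x \<bullet> y"
  by (simp add: inner_vec_def J_wo_def sum_wo[where f="\<lambda>j. x $ j * y $ j"])

lemma inner_J_wo': "J_wo' x \<bullet> J_wo' (y::real^'b::finite wo) = x \<bullet> y"
  by (metis J_wo_inv(2) inner_J_wo)

lemma lborel_J_wo: "distr lborel borel (J_wo :: real^'b::finite \<Rightarrow> _) = lborel"
proof (rule lborel_eqI[symmetric])
  have [measurable]: "(J_wo :: real^'b \<Rightarrow> _) \<in> borel_measurable borel"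
    by (rule linear_borel_measurable[OF linear_J_wo(1)])
  fix l u :: "real^'b wo"
  assume le: "\<And>b. b \<in> Basis \<Longrightarrow> l \<bullet> b \<le> u \<bullet> b"
  have pre: "(J_wo :: real^'b \<Rightarrow> _) -` box l u = box (J_wo' l) (J_wo' u)"
    by (auto simp: mem_box_cart J_wo_def J_wo'_def) (metis Abs_wo_inverse UNIV_I Rep_wo_inverse)+
  have le': "\<And>b. b \<in> Basis \<Longrightarrow> J_wo' l \<bullet> b \<le> J_wo' u \<bullet> b"
  proof -
    fix b :: "real^'b" assume "b \<in> Basis"
    then obtain i where b: "b = axis i 1" by (auto simp: Basis_vec_axis)
    have "l \<bullet> axis (Abs_wo i) 1 \<le> u \<bullet> axis (Abs_wo i) 1" by (rule le) (simp add: Basis_vec_axis)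
    then show "J_wo' l \<bullet> b \<le> J_wo' u \<bullet> b"
      by (simp add: b J_wo'_def cart_eq_inner_axis[symmetric])
  qed
  have "emeasure (distr lborel borel J_wo) (box l u) = emeasure lborel (box (J_wo' l) (J_wo' u) :: (real^'b) set)"
    by (simp add: emeasure_distr pre)
  also have "\<dots> = (\<Prod>b\<in>Basis. (J_wo' u - J_wo' l) \<bullet> b)"
    using le' by simp
  also have "\<dots> = (\<Prod>b\<in>Basis. (u - l) \<bullet> b)"
    unfolding prod_Basis_vec
    by (simp add: inner_axis J_wo'_def prod_wo[symmetric, where f="\<lambda>j. u $ Abs_wo j - l $ Abs_wo j"] Rep_wo_inverse)
  finally show "emeasure (distr lborel borel J_wo) (box l u) = (\<Prod>b\<in>Basis. (u - l) \<bullet> b)" .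
qed simp

lemma lborel_orth:
  fixes f :: "real^'n \<Rightarrow> real^'n"
  assumes f: "orthogonal_transformation f"
  shows "distr lborel borel f = lborel"
proof -
  define f' where "f' = (\<lambda>y::real^'n wo. J_wo (f (J_wo' y)))"
  have lin: "linear f" using f orthogonal_transformation_linear by blast
  have "orthogonal_transformation f'"
    unfolding orthogonal_transformation_def f'_def
  proof (intro conjI allI)
    show "linear (\<lambda>y. J_wo (f (J_wo' y)))"
      using linear_compose[OF linear_compose[OF linear_J_wo(2) lin] linear_J_wo(1)] by (simp add: o_def)
    fix v w :: "real^'n wo"
    show "J_wo (f (J_wo' v)) \<bullet> J_wo (f (J_wo' w)) = v \<bullet> w"
      using f by (simp add: inner_J_wo inner_J_wo' orthogonal_transformation_def)
  qed
  then have D': "distr lborel borel f' = lborel" by (rule lborel_orth_wo)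
  have [measurable]: "f' \<in> borel_measurable borel" "f \<in> borel_measurable borel"
    "(J_wo :: real^'n \<Rightarrow> _) \<in> borel_measurable borel" "(J_wo' :: _ \<Rightarrow> real^'n) \<in> borel_measurable borel"
    using \<open>orthogonal_transformation f'\<close> lin linear_J_wo
    by (auto intro!: linear_borel_measurable simp: orthogonal_transformation)
  have eqf: "f = J_wo' \<circ> f' \<circ> J_wo" by (simp add: f'_def fun_eq_iff)
  have "distr lborel borel (J_wo' :: _ \<Rightarrow> real^'n) = distr (distr lborel borel J_wo) borel J_wo'"
    by (simp add: lborel_J_wo)
  also have "\<dots> = lborel"
    by (subst distr_distr) (auto simp: o_def distr_id2)
  finally have DJ': "distr lborel borel (J_wo' :: _ \<Rightarrow> real^'n) = lborel" .
  have "distr lborel borel f = distr (distr (distr lborel borel J_wo) borel f') borel J_wo'"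
    by (subst distr_distr, simp, simp, subst distr_distr) (auto simp: eqf o_def)
  also have "\<dots> = lborel" by (simp add: lborel_J_wo D' DJ')
  finally show ?thesis .
qed



lemma gauss_Basis:
  "gauss_iso_density c sg (x::real^'d) = (\<Prod>b\<in>Basis. normal_density (c \<bullet> b) sg (x \<bullet> b))"
  unfolding gauss_iso_density_def prod_Basis_vec by (simp add: cart_eq_inner_axis)

lemma gauss_radial:
  "gauss_iso_density c sg (x::real^'d) =
     (1 / sqrt (2 * pi * sg\<^sup>2)) ^ CARD('d) * exp (- (norm (x - c))\<^sup>2 / (2 * sg\<^sup>2))"
proof -
  have n: "(norm (x - c))\<^sup>2 = (\<Sum>i\<in>UNIV. (x $ i - c $ i)\<^sup>2)"
    unfolding power2_norm_eq_inner inner_vec_def by (simp add: power2_eq_square)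
  show ?thesis
    unfolding gauss_iso_density_def normal_density_def prod.distrib n
    by (simp add: exp_sum[symmetric] sum_negf sum_divide_distrib)
qed

lemma gauss_nonneg[simp]: "0 \<le> gauss_iso_density c sg x"
  unfolding gauss_iso_density_def by (simp add: prod_nonneg)

lemma gauss_measurable[measurable]: "gauss_iso_density c sg \<in> borel_measurable borel"
  unfolding gauss_iso_density_def[abs_def] by measurable

lemma nn_integral_normal:
  assumes "0 < sg" shows "(\<integral>\<^sup>+t. ennreal (normal_density m sg t) \<partial>lborel) = 1"
  using assms by (subst nn_integral_eq_integral) (auto simp: integral_normal_density)

lemma nn_gauss:
  assumes "0 < sg" shows "(\<integral>\<^sup>+x. ennreal (gauss_iso_density c sg (x::real^'d)) \<partial>lborel) = 1"
proof -
  have "(\<integral>\<^sup>+x. ennreal (gauss_iso_density c sg (x::real^'d)) \<partial>lborel)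
      = (\<integral>\<^sup>+x. (\<Prod>b\<in>Basis. ennreal (normal_density (c \<bullet> b) sg (x \<bullet> b))) \<partial>lborel)"
    by (simp add: gauss_Basis prod_ennreal)
  also have "\<dots> = (\<Prod>b\<in>(Basis::(real^'d) set). (\<integral>\<^sup>+t. ennreal (normal_density (c \<bullet> b) sg t) \<partial>lborel))"
    by (rule nn_integral_lborel_prod) auto
  also have "\<dots> = 1" using assms by (simp add: nn_integral_normal)
  finally show ?thesis .
qed

lemma sets_mix[measurable_cong, simp]: "sets (mixture_law a b sg) = sets borel"
  by (simp add: mixture_law_def)

lemma space_mix[simp]: "space (mixture_law a b sg) = UNIV"
  by (simp add: mixture_law_def)


lemma prob_mix:
  assumes "0 < sg" shows "prob_space (mixture_law a b sg :: (real^'d) measure)"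
proof (rule prob_spaceI)
  have "emeasure (mixture_law a b sg :: (real^'d) measure) (space (mixture_law a b sg))
     = (\<integral>\<^sup>+x. ennreal (1/2 * gauss_iso_density a sg (x::real^'d) + 1/2 * gauss_iso_density b sg x) \<partial>lborel)"
    by (simp add: mixture_law_def emeasure_density)
  also have "\<dots> = (\<integral>\<^sup>+x. ennreal (1/2) * ennreal (gauss_iso_density a sg (x::real^'d)) + ennreal (1/2) * ennreal (gauss_iso_density b sg x) \<partial>lborel)"
    by (intro nn_integral_cong) (simp only: ennreal_plus ennreal_mult mult_nonneg_nonneg order_refl divide_nonneg_nonneg zero_le_one zero_le_numeral gauss_nonneg)
  also have "\<dots> = ennreal (1/2) * 1 + ennreal (1/2) * 1"
    using assms by (subst nn_integral_add) (auto simp: nn_integral_cmult nn_gauss)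
  also have "\<dots> = 1"
    by (simp only: mult_1_right ennreal_plus[symmetric]) simp
  finally show "emeasure (mixture_law a b sg :: (real^'d) measure) (space (mixture_law a b sg)) = 1" .
qed

lemma one_plus_sum_le_prod:
  assumes "finite A" "\<And>i. i \<in> A \<Longrightarrow> 0 \<le> f i"
  shows "1 + sum f A \<le> (\<Prod>i\<in>A. 1 + f i :: real)"
  using assms
proof (induction A rule: finite_induct)
  case (insert a A)
  have P: "1 \<le> (\<Prod>i\<in>A. 1 + f i)" using insert by (intro prod_ge_1) auto
  have "1 + sum f (insert a A) = f a + (1 + sum f A)" using insert by simp
  also have "\<dots> \<le> f a * (\<Prod>i\<in>A. 1 + f i) + (\<Prod>i\<in>A. 1 + f i)"
    using insert P by (intro add_mono mult_left_mono_neg) (auto intro: order_trans[OF _ mult_left_mono[OF P]])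
  also have "\<dots> = (\<Prod>i\<in>insert a A. 1 + f i)" using insert by (simp add: algebra_simps)
  finally show ?case .
qed simp

lemma normal_poly_integrable:
  assumes "0 < sg"
  shows "integrable lborel (\<lambda>t. normal_density m sg t * (1 + \<bar>t\<bar>) ^ p)"
proof -
  have bin: "(1 + \<bar>t - m\<bar>) ^ p = (\<Sum>k\<le>p. of_nat (p choose k) * \<bar>t - m\<bar> ^ k)" for t
    by (subst add.commute) (simp add: binomial_ring mult.commute)
  have I1: "integrable lborel (\<lambda>t. (1 + \<bar>m\<bar>) ^ p * (\<Sum>k\<le>p. of_nat (p choose k) * (normal_density m sg t * \<bar>t - m\<bar> ^ k)))"
    using assms by (auto intro!: integrable_sum integrable_normal_moment_abs)
  show ?thesis
  proof (rule Bochner_Integration.integrable_bound[OF I1])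
    show "AE x in lborel. norm (normal_density m sg x * (1 + \<bar>x\<bar>) ^ p)
        \<le> norm ((1 + \<bar>m\<bar>) ^ p * (\<Sum>k\<le>p. of_nat (p choose k) * (normal_density m sg x * \<bar>x - m\<bar> ^ k)))"
    proof (rule AE_I2)
      fix t
      have "1 + \<bar>t\<bar> \<le> (1 + \<bar>m\<bar>) * (1 + \<bar>t - m\<bar>)"
      proof -
        have "\<bar>t\<bar> \<le> \<bar>m\<bar> + \<bar>t - m\<bar>" using abs_triangle_ineq[of m "t - m"] by simp
        then show ?thesis by (simp add: algebra_simps) (smt (verit) abs_ge_zero mult_nonneg_nonneg)
      qed
      then have "(1 + \<bar>t\<bar>) ^ p \<le> ((1 + \<bar>m\<bar>) * (1 + \<bar>t - m\<bar>)) ^ p"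
        by (intro power_mono) auto
      also have "\<dots> = (1 + \<bar>m\<bar>) ^ p * (\<Sum>k\<le>p. of_nat (p choose k) * \<bar>t - m\<bar> ^ k)"
        by (simp add: power_mult_distrib bin)
      finally have *: "normal_density m sg t * (1 + \<bar>t\<bar>) ^ p \<le>
          normal_density m sg t * ((1 + \<bar>m\<bar>) ^ p * (\<Sum>k\<le>p. of_nat (p choose k) * \<bar>t - m\<bar> ^ k))"
        by (intro mult_left_mono) auto
      have eq: "normal_density m sg t * ((1 + \<bar>m\<bar>) ^ p * (\<Sum>k\<le>p. of_nat (p choose k) * \<bar>t - m\<bar> ^ k))
          = (1 + \<bar>m\<bar>) ^ p * (\<Sum>k\<le>p. of_nat (p choose k) * (normal_density m sg t * \<bar>t - m\<bar> ^ k))"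
        by (simp add: sum_distrib_left algebra_simps)
      show "norm (normal_density m sg t * (1 + \<bar>t\<bar>) ^ p)
        \<le> norm ((1 + \<bar>m\<bar>) ^ p * (\<Sum>k\<le>p. of_nat (p choose k) * (normal_density m sg t * \<bar>t - m\<bar> ^ k)))"
        using * eq by (simp add: sum_nonneg)
    qed
  qed measurable
qed

lemma gauss_poly_integrable:
  assumes "0 < sg"
  shows "integrable lborel (\<lambda>x::real^'d. gauss_iso_density c sg x * (1 + norm x) ^ p)"
proof (rule integrableI_nonneg)
  show "AE x in lborel. 0 \<le> gauss_iso_density c sg (x::real^'d) * (1 + norm x) ^ p" by simp
  have "(\<integral>\<^sup>+x. ennreal (gauss_iso_density c sg (x::real^'d) * (1 + norm x) ^ p) \<partial>lborel)
     \<le> (\<integral>\<^sup>+x. (\<Prod>b\<in>Basis. ennreal (normal_density (c \<bullet> b) sg (x \<bullet> b) * (1 + \<bar>x \<bullet> b\<bar>) ^ p)) \<partial>lborel)"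
  proof (rule nn_integral_mono)
    fix x :: "real^'d"
    have "1 + norm x \<le> 1 + (\<Sum>b\<in>Basis. \<bar>x \<bullet> b\<bar>)" using norm_le_l1[of x] by simp
    also have "\<dots> \<le> (\<Prod>b\<in>Basis. 1 + \<bar>x \<bullet> b\<bar>)" by (rule one_plus_sum_le_prod) auto
    finally have "(1 + norm x) ^ p \<le> (\<Prod>b\<in>Basis. 1 + \<bar>x \<bullet> b\<bar>) ^ p" by (intro power_mono) auto
    then have "gauss_iso_density c sg x * (1 + norm x) ^ p \<le> gauss_iso_density c sg x * (\<Prod>b\<in>Basis. 1 + \<bar>x \<bullet> b\<bar>) ^ p"
      by (intro mult_left_mono) auto
    also have "\<dots> = (\<Prod>b\<in>Basis. normal_density (c \<bullet> b) sg (x \<bullet> b) * (1 + \<bar>x \<bullet> b\<bar>) ^ p)"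
      by (simp add: gauss_Basis prod.distrib prod_power_distrib)
    finally show "ennreal (gauss_iso_density c sg x * (1 + norm x) ^ p)
       \<le> (\<Prod>b\<in>Basis. ennreal (normal_density (c \<bullet> b) sg (x \<bullet> b) * (1 + \<bar>x \<bullet> b\<bar>) ^ p))"
      by (subst prod_ennreal) (auto intro!: ennreal_leI)
  qed
  also have "\<dots> = (\<Prod>b\<in>(Basis::(real^'d) set). (\<integral>\<^sup>+t. ennreal (normal_density (c \<bullet> b) sg t * (1 + \<bar>t\<bar>) ^ p) \<partial>lborel))"
    by (rule nn_integral_lborel_prod) auto
  also have "\<dots> < \<infinity>"
  proof -
    have "(\<integral>\<^sup>+t. ennreal (normal_density (c \<bullet> b) sg t * (1 + \<bar>t\<bar>) ^ p) \<partial>lborel) \<noteq> \<infinity>" for b :: "real^'d"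
      using assms by (subst nn_integral_eq_integral) (auto intro!: normal_poly_integrable)
    then show ?thesis by (simp add: less_top[symmetric] ennreal_prod_eq_top top_unique)
  qed
  finally show "(\<integral>\<^sup>+x. ennreal (gauss_iso_density c sg (x::real^'d) * (1 + norm x) ^ p) \<partial>lborel) < \<infinity>" .
qed measurable

lemma mix_poly_integrable:
  assumes "0 < sg"
  shows "integrable (mixture_law a b sg) (\<lambda>x::real^'d. (1 + norm x) ^ p)"
proof -
  have "integrable lborel (\<lambda>x::real^'d. 1/2 * (gauss_iso_density a sg x * (1 + norm x) ^ p)
          + 1/2 * (gauss_iso_density b sg x * (1 + norm x) ^ p))"
    using assms by (auto intro!: integrable_add integrable_mult_right gauss_poly_integrable)
  then have "integrable lborel (\<lambda>x::real^'d. (1/2 * gauss_iso_density a sg x + 1/2 * gauss_iso_density b sg x) *\<^sub>R (1 + norm x) ^ p)"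
    by (simp add: algebra_simps)
  then show ?thesis
    unfolding mixture_law_def by (subst integrable_density) auto
qed



definition fold_e :: "real^'d \<Rightarrow> real^'d \<Rightarrow> real^'d" where
  "fold_e e x = (if x \<bullet> e < 0 then - x else x)"

lemma fold_e_measurable[measurable]: "fold_e e \<in> borel_measurable borel"
  unfolding fold_e_def[abs_def] by measurable

lemma orth_uminus: "orthogonal_transformation (uminus :: real^'d \<Rightarrow> _)"
  by (simp add: orthogonal_transformation_def linear_uminus)

lemma orth_measurable: "orthogonal_transformation (Q :: real^'d \<Rightarrow> real^'d) \<Longrightarrow> Q \<in> borel_measurable borel"
  by (rule linear_borel_measurable) (simp add: orthogonal_transformation)

lemma AE_hyperplane:
  assumes "(e::real^'d) \<noteq> 0" shows "AE y in lborel. y \<bullet> e \<noteq> 0"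
proof (rule AE_I')
  have "negligible {x::real^'d. e \<bullet> x = 0}" using assms by (intro negligible_hyperplane) simp
  then have "{x::real^'d. e \<bullet> x = 0} \<in> null_sets lebesgue" by (simp add: negligible_iff_null_sets)
  moreover have "{x::real^'d. e \<bullet> x = 0} \<in> sets lborel" by measurable
  ultimately show "{x::real^'d. e \<bullet> x = 0} \<in> null_sets lborel"
    using null_sets_completion_iff by blast
qed (auto simp: inner_commute)

lemma nn_integral_orth:
  assumes Q: "orthogonal_transformation (Q :: real^'d \<Rightarrow> real^'d)" and [measurable]: "f \<in> borel_measurable borel"
  shows "(\<integral>\<^sup>+x. f (Q x) \<partial>lborel) = (\<integral>\<^sup>+y. f y \<partial>(lborel :: (real^'d) measure))"
proof -
  have [measurable]: "Q \<in> borel_measurable borel" using orth_measurable[OF Q] .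
  have "(\<integral>\<^sup>+y. f y \<partial>(lborel :: (real^'d) measure)) = (\<integral>\<^sup>+y. f y \<partial>(distr lborel borel Q))"
    by (simp add: lborel_orth[OF Q])
  also have "\<dots> = (\<integral>\<^sup>+x. f (Q x) \<partial>lborel)"
    by (rule nn_integral_distr) auto
  finally show ?thesis by simp
qed

lemma gauss_iso_eq:
  assumes "norm (x - c) = norm (y - c')"
  shows "gauss_iso_density c sg (x::real^'d) = gauss_iso_density (c'::real^'d) sg y"
  using assms by (simp add: gauss_radial)

lemma row_fold:
  fixes a b :: "real^'d"
  assumes Q: "orthogonal_transformation (Q :: real^'d \<Rightarrow> real^'d)" and QQ: "\<And>x. Q (Q x) = x"
    and Qa: "Q a = a" and Qb: "Q b = - b" and b0: "b \<noteq> 0"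
  shows "distr (mixture_law a b sg) (mixture_law a b sg) (\<lambda>x. fold_e b (Q x))
       = distr (mixture_law a b sg) (mixture_law a b sg) (fold_e b)"
proof (rule measure_eqI)
  have [measurable]: "Q \<in> borel_measurable borel" using orth_measurable[OF Q] .
  have nQ: "norm (Q x) = norm x" for x using Q by (simp add: orthogonal_transformation)
  have linQ: "linear Q" using Q by (simp add: orthogonal_transformation)
  fix A assume "A \<in> sets (distr (mixture_law a b sg) (mixture_law a b sg) (\<lambda>x. fold_e b (Q x)))"
  then have A[measurable]: "A \<in> sets borel" by simp
  define G where "G c y = ennreal (gauss_iso_density c sg y)" for c y :: "real^'d"
  define I where "I y = (indicator A (fold_e b y) :: ennreal)" for y
  have [measurable]: "G c \<in> borel_measurable borel" for c unfolding G_def by measurable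
  have [measurable]: "I \<in> borel_measurable borel" unfolding I_def by measurable
  have split: "ennreal (1/2 * u + 1/2 * v) * w = ennreal (1/2) * (ennreal u * w) + ennreal (1/2) * (ennreal v * w)"
    if "0 \<le> u" "0 \<le> v" for u v :: real and w :: ennreal
  proof -
    have "ennreal (1/2 * u + 1/2 * v) = ennreal (1/2) * ennreal u + ennreal (1/2) * ennreal v"
      using that by (simp only: ennreal_plus ennreal_mult mult_nonneg_nonneg divide_nonneg_nonneg zero_le_one zero_le_numeral order_refl)
    then show ?thesis by (simp only: distrib_right mult.assoc)
  qed
  have emix: "emeasure (distr (mixture_law a b sg) (mixture_law a b sg) h) A
      = ennreal (1/2) * (\<integral>\<^sup>+y. G a y * indicator A (h y) \<partial>lborel) + ennreal (1/2) * (\<integral>\<^sup>+y. G b y * indicator A (h y) \<partial>lborel)"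
    if [measurable]: "h \<in> borel_measurable borel" for h
  proof -
    have "emeasure (distr (mixture_law a b sg) (mixture_law a b sg) h) A
        = emeasure (mixture_law a b sg) (h -` A)"
      by (subst emeasure_distr) auto
    also have "\<dots> = (\<integral>\<^sup>+y. ennreal (1/2 * gauss_iso_density a sg y + 1/2 * gauss_iso_density b sg y) * indicator A (h y) \<partial>lborel)"
    proof -
      have "h -` A \<in> sets borel" using measurable_sets_borel[OF that A] by simp
      then show ?thesis
        unfolding mixture_law_def by (subst emeasure_density) (auto intro!: nn_integral_cong split: split_indicator)
    qed
    also have "\<dots> = (\<integral>\<^sup>+y. ennreal (1/2) * (G a y * indicator A (h y)) + ennreal (1/2) * (G b y * indicator A (h y)) \<partial>lborel)"
      unfolding G_def by (intro nn_integral_cong split) simp_all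
    also have "\<dots> = ennreal (1/2) * (\<integral>\<^sup>+y. G a y * indicator A (h y) \<partial>lborel) + ennreal (1/2) * (\<integral>\<^sup>+y. G b y * indicator A (h y) \<partial>lborel)"
      by (subst nn_integral_add) (auto simp: nn_integral_cmult)
    finally show ?thesis .
  qed
  have ga: "(\<integral>\<^sup>+y. G a y * indicator A (fold_e b (Q y)) \<partial>lborel) = (\<integral>\<^sup>+y. G a y * I y \<partial>lborel)"
  proof -
    have "(\<integral>\<^sup>+y. G a y * I y \<partial>lborel) = (\<integral>\<^sup>+y. G a (Q y) * I (Q y) \<partial>lborel)"
      by (rule nn_integral_orth[OF Q, symmetric]) measurable
    also have "\<dots> = (\<integral>\<^sup>+y. G a y * indicator A (fold_e b (Q y)) \<partial>lborel)"
    proof (intro nn_integral_cong)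
      fix y
      have "norm (Q y - a) = norm (y - a)"
        using linear_diff[OF linQ, of y a] nQ[of "y - a"] Qa by simp
      then show "G a (Q y) * I (Q y) = G a y * indicator A (fold_e b (Q y))"
      proof -
        have "gauss_iso_density a sg (Q y) = gauss_iso_density a sg y"
          by (rule gauss_iso_eq) fact
        then show ?thesis by (simp add: G_def I_def)
      qed
    qed
    finally show ?thesis by simp
  qed
  have gb: "(\<integral>\<^sup>+y. G b y * indicator A (fold_e b (Q y)) \<partial>lborel) = (\<integral>\<^sup>+y. G b y * I y \<partial>lborel)"
  proof -
    have "(\<integral>\<^sup>+y. G b y * indicator A (fold_e b (Q y)) \<partial>lborel)
        = (\<integral>\<^sup>+y. G b (Q y) * indicator A (fold_e b (Q (Q y))) \<partial>lborel)"
      by (rule nn_integral_orth[OF Q, symmetric]) measurable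
    also have "\<dots> = (\<integral>\<^sup>+y. G (-b) y * I y \<partial>lborel)"
    proof (intro nn_integral_cong)
      fix y
      have "norm (Q y - b) = norm (y - (-b))"
        using linear_add[OF linQ, of y b] nQ[of "y + b"] Qb by simp
      then have "gauss_iso_density b sg (Q y) = gauss_iso_density (-b) sg y"
        by (rule gauss_iso_eq)
      then show "G b (Q y) * indicator A (fold_e b (Q (Q y))) = G (-b) y * I y"
        by (simp add: G_def I_def QQ)
    qed
    also have "\<dots> = (\<integral>\<^sup>+y. G (-b) (-y) * I (-y) \<partial>lborel)"
      by (rule nn_integral_orth[OF orth_uminus, symmetric]) measurable
    also have "\<dots> = (\<integral>\<^sup>+y. G b y * I y \<partial>lborel)"
    proof (rule nn_integral_cong_AE)
      show "AE y in lborel. G (-b) (-y) * I (-y) = G b y * I y"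
        using AE_hyperplane[OF b0]
      proof (rule AE_mp, intro AE_I2 impI)
        fix y :: "real^'d" assume yb: "y \<bullet> b \<noteq> 0"
        have "fold_e b (-y) = fold_e b y" using yb by (auto simp: fold_e_def)
        moreover have "gauss_iso_density (-b) sg (-y) = gauss_iso_density b sg y"
          by (rule gauss_iso_eq) (simp add: norm_minus_commute)
        ultimately show "G (-b) (-y) * I (-y) = G b y * I y" by (simp add: G_def I_def)
      qed
    qed
    finally show ?thesis .
  qed
  show "emeasure (distr (mixture_law a b sg) (mixture_law a b sg) (\<lambda>x. fold_e b (Q x))) A
      = emeasure (distr (mixture_law a b sg) (mixture_law a b sg) (fold_e b)) A"
    by (simp add: emix ga gb I_def)
qed simp



lemma compose_measurable:
  assumes "f \<in> measurable M N"
  shows "compose I f \<in> measurable (PiM I (\<lambda>_. M)) (PiM I (\<lambda>_. N))"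
  unfolding compose_def using assms
  by (intro measurable_restrict) (auto intro: measurable_compose[OF measurable_component_singleton])

lemma integral_PiM_distr:
  fixes F :: "(nat \<Rightarrow> 'a) \<Rightarrow> real"
  assumes P: "prob_space M" and fin: "finite I"
    and f: "f \<in> measurable M M"
    and F: "F \<in> borel_measurable (PiM I (\<lambda>_. M))"
  shows "integral\<^sup>L (PiM I (\<lambda>_. M)) (\<lambda>X. F (compose I f X)) = integral\<^sup>L (PiM I (\<lambda>_. distr M M f)) F"
proof -
  have "distr (PiM I (\<lambda>_. M)) (PiM I (\<lambda>_. M)) (compose I f) = PiM I (\<lambda>_. distr M M f)"
    using P fin f by (intro distr_PiM_finite_prob_space') auto
  moreover have "integral\<^sup>L (distr (PiM I (\<lambda>_. M)) (PiM I (\<lambda>_. M)) (compose I f)) F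
      = integral\<^sup>L (PiM I (\<lambda>_. M)) (\<lambda>X. F (compose I f X))"
    by (rule integral_distr[OF compose_measurable[OF f] F])
  ultimately show ?thesis by simp
qed

lemma data_sym:
  fixes F :: "(nat \<Rightarrow> real^'d) \<Rightarrow> real" and a b :: "real^'d"
  assumes sg: "0 < sg"
    and Q: "orthogonal_transformation (Q :: real^'d \<Rightarrow> real^'d)" and QQ: "\<And>x. Q (Q x) = x"
    and Qa: "Q a = a" and Qb: "Q b = - b" and b0: "b \<noteq> 0"
    and F: "F \<in> borel_measurable (PiM {..<L} (\<lambda>_. mixture_law a b sg))"
    and Fe: "\<And>X. F (compose {..<L} (fold_e b) X) = F X"
  shows "integral\<^sup>L (data_law L a b sg) (\<lambda>X. F (compose {..<L} Q X)) = integral\<^sup>L (data_law L a b sg) F"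
proof -
  define M where "M = mixture_law a b sg"
  have P: "prob_space M" unfolding M_def using prob_mix[OF sg] .
  have mQ: "Q \<in> measurable M M" unfolding M_def using orth_measurable[OF Q] by simp
  have mf: "fold_e b \<in> measurable M M" unfolding M_def by simp
  have PQ: "prob_space (distr M M Q)" using P mQ by (rule prob_space.prob_space_distr)
  have sQ: "sets (distr M M Q) = sets M" by simp
  have mf': "fold_e b \<in> measurable (distr M M Q) (distr M M Q)"
    using mf by (simp add: measurable_cong_sets[OF sQ sQ])
  have FD: "F \<in> borel_measurable (PiM {..<L} (\<lambda>_. distr M M Q))"
    using F unfolding M_def[symmetric] by (simp add: measurable_cong_sets[OF sets_PiM_cong[OF refl sQ] refl])
  have FD2: "F \<in> borel_measurable (PiM {..<L} (\<lambda>_. M))" using F by (simp add: M_def)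
  have "integral\<^sup>L (data_law L a b sg) (\<lambda>X. F (compose {..<L} Q X))
      = integral\<^sup>L (PiM {..<L} (\<lambda>_. distr M M Q)) F"
    unfolding data_law_def M_def[symmetric] by (rule integral_PiM_distr[OF P _ mQ FD2]) simp
  also have "\<dots> = integral\<^sup>L (PiM {..<L} (\<lambda>_. distr M M Q)) (\<lambda>X. F (compose {..<L} (fold_e b) X))"
    by (simp add: Fe)
  also have "\<dots> = integral\<^sup>L (PiM {..<L} (\<lambda>_. distr (distr M M Q) (distr M M Q) (fold_e b))) F"
    by (rule integral_PiM_distr[OF PQ _ mf' FD]) simp
  also have "distr (distr M M Q) (distr M M Q) (fold_e b) = distr M M (\<lambda>x. fold_e b (Q x))"
  proof -
    have "distr (distr M M Q) (distr M M Q) (fold_e b) = distr (distr M M Q) M (fold_e b)"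
      by (rule distr_cong) (simp_all add: sQ)
    also have "\<dots> = distr M M (fold_e b \<circ> Q)"
      using mQ mf by (subst distr_distr) (auto simp: measurable_cong_sets[OF sQ refl])
    finally show ?thesis by (simp add: o_def)
  qed
  also have "\<dots> = distr M M (fold_e b)"
    unfolding M_def using row_fold[OF Q QQ Qa Qb b0] .
  also have "integral\<^sup>L (PiM {..<L} (\<lambda>_. distr M M (fold_e b))) F
      = integral\<^sup>L (PiM {..<L} (\<lambda>_. M)) (\<lambda>X. F (compose {..<L} (fold_e b) X))"
    by (rule integral_PiM_distr[OF P _ mf FD2, symmetric]) simp
  also have "\<dots> = integral\<^sup>L (data_law L a b sg) F"
    by (simp add: Fe data_law_def M_def)
  finally show ?thesis .
qed



lemma F_measurable:
  assumes "l < L"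
  shows "(\<lambda>X. (norm (X l - T_lin L lam m0 m1 X l))\<^sup>2) \<in> borel_measurable (PiM {..<L} (\<lambda>_. mixture_law a b sg))"
proof -
  let ?M = "PiM {..<L} (\<lambda>_. mixture_law a b sg)"
  have c: "(\<lambda>X. X k) \<in> borel_measurable ?M" if "k < L" for k
    using measurable_component_singleton[of k "{..<L}" "\<lambda>_. mixture_law a b sg"] that
    by (simp add: measurable_cong_sets[OF refl sets_mix])
  have n: "(\<lambda>X. norm (f X)) \<in> borel_measurable ?M" if "f \<in> borel_measurable ?M" for f :: "_ \<Rightarrow> real^'a"
    using measurable_compose[OF that borel_measurable_norm] by simp
  show ?thesis unfolding T_lin_def
    by (intro borel_measurable_power n borel_measurable_diff borel_measurable_scaleR borel_measurable_sum
        borel_measurable_times borel_measurable_add borel_measurable_inner borel_measurable_const c assms)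
       (simp_all add: assms)
qed

lemma T_lin_sign:
  assumes "\<And>k. k < L \<Longrightarrow> X' k = s k *\<^sub>R X k" "\<And>k. k < L \<Longrightarrow> s k * s k = 1" "l < L"
  shows "T_lin L lam m0 m1 X' l = s l *\<^sub>R T_lin L lam m0 m1 X l"
proof -
  define t where "t Y k = (lam * ((Y l \<bullet> m0) * (m0 \<bullet> Y k) + (Y l \<bullet> m1) * (m1 \<bullet> Y k))) *\<^sub>R Y k"
    for Y :: "nat \<Rightarrow> real^'a" and k
  have T: "T_lin L lam m0 m1 Y l = (2 / real L) *\<^sub>R (\<Sum>k<L. t Y k)" for Y
    by (simp add: T_lin_def t_def)
  have eq: "t X' k = s l *\<^sub>R t X k" if k: "k < L" for k
  proof -
    have "t X' k = (s l * (s k * s k) * (lam * ((X l \<bullet> m0) * (m0 \<bullet> X k) + (X l \<bullet> m1) * (m1 \<bullet> X k)))) *\<^sub>R X k"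
      using assms(1)[OF k] assms(1)[OF assms(3)] by (simp add: t_def algebra_simps)
    then show ?thesis using assms(2)[OF k] by (simp add: t_def)
  qed
  have "(\<Sum>k<L. t X' k) = (\<Sum>k<L. s l *\<^sub>R t X k)" by (intro sum.cong) (auto simp: eq)
  then show ?thesis by (simp add: T scaleR_sum_right[symmetric])
qed

lemma F_sign:
  assumes "\<And>k. k < L \<Longrightarrow> X' k = s k *\<^sub>R X k" "\<And>k. k < L \<Longrightarrow> s k * s k = 1" "l < L"
  shows "(norm (X' l - T_lin L lam m0 m1 X' l))\<^sup>2 = (norm (X l - T_lin L lam m0 m1 X l))\<^sup>2"
proof -
  have "X' l - T_lin L lam m0 m1 X' l = s l *\<^sub>R (X l - T_lin L lam m0 m1 X l)"
    using T_lin_sign[OF assms] assms(1)[OF assms(3)] by (simp add: scaleR_diff_right)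
  then have "(norm (X' l - T_lin L lam m0 m1 X' l))\<^sup>2 = (\<bar>s l\<bar> * \<bar>s l\<bar>) * (norm (X l - T_lin L lam m0 m1 X l))\<^sup>2"
    by (simp add: power2_eq_square)
  also have "\<bar>s l\<bar> * \<bar>s l\<bar> = 1" using assms(2)[OF assms(3)] by (simp only: abs_mult_self_eq)
  finally show ?thesis by simp
qed

lemma F_fold:
  assumes "l < L"
  shows "(norm (compose {..<L} (fold_e b) X l - T_lin L lam m0 m1 (compose {..<L} (fold_e b) X) l))\<^sup>2
       = (norm (X l - T_lin L lam m0 m1 X l))\<^sup>2"
  by (rule F_sign[where s="\<lambda>k. if X k \<bullet> b < 0 then -1 else 1"]) (auto simp: compose_def fold_e_def assms)

lemma sym_of_orth_inv:
  assumes "orthogonal_transformation Q" "\<And>x. Q (Q x) = x"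
  shows "Q x \<bullet> y = x \<bullet> Q y"
proof -
  have "Q x \<bullet> y = Q x \<bullet> Q (Q y)" using assms(2) by simp
  also have "\<dots> = x \<bullet> Q y" using assms(1) by (simp only: orthogonal_transformation_def)
  finally show ?thesis .
qed

lemma T_lin_Q:
  assumes Q: "orthogonal_transformation Q" and QQ: "\<And>x. Q (Q x) = x" and l: "l < L"
  shows "T_lin L lam m0 m1 (compose {..<L} Q X) l = Q (T_lin L lam (Q m0) (Q m1) X l)"
proof -
  have lin: "linear Q" using Q by (simp add: orthogonal_transformation)
  have sy: "Q x \<bullet> y = x \<bullet> Q y" for x y using sym_of_orth_inv[OF Q QQ] .
  have "T_lin L lam m0 m1 (compose {..<L} Q X) l = (2 / real L) *\<^sub>R (\<Sum>k<L.
      (lam * ((X l \<bullet> Q m0) * (Q m0 \<bullet> X k) + (X l \<bullet> Q m1) * (Q m1 \<bullet> X k))) *\<^sub>R Q (X k))"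
    unfolding T_lin_def
    by (intro arg_cong2[where f=scaleR] refl sum.cong) (auto simp: compose_def l sy)
  also have "\<dots> = Q (T_lin L lam (Q m0) (Q m1) X l)"
    unfolding T_lin_def by (simp add: linear_scale[OF lin] linear_sum[OF lin])
  finally show ?thesis .
qed

lemma risk_Q:
  fixes a b :: "real^'d"
  assumes sg: "0 < sg"
    and Q: "orthogonal_transformation (Q :: real^'d \<Rightarrow> real^'d)" and QQ: "\<And>x. Q (Q x) = x"
    and Qa: "Q a = a" and Qb: "Q b = - b" and b0: "b \<noteq> 0"
  shows "risk L sg lam a b (Q m0) (Q m1) = risk L sg lam a b m0 m1"
proof -
  have nQ: "norm (Q x) = norm x" for x using Q by (simp add: orthogonal_transformation)
  have lin: "linear Q" using Q by (simp add: orthogonal_transformation)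
  have "integral\<^sup>L (data_law L a b sg) (\<lambda>X. (norm (X l - T_lin L lam (Q m0) (Q m1) X l))\<^sup>2)
      = integral\<^sup>L (data_law L a b sg) (\<lambda>X. (norm (X l - T_lin L lam m0 m1 X l))\<^sup>2)" if l: "l < L" for l
  proof -
    have fe: "(\<lambda>X. (norm (X l - T_lin L lam (Q m0) (Q m1) X l))\<^sup>2)
        = (\<lambda>X. (\<lambda>Y. (norm (Y l - T_lin L lam m0 m1 Y l))\<^sup>2) (compose {..<L} Q X))"
    proof
      fix X
      have "compose {..<L} Q X l - T_lin L lam m0 m1 (compose {..<L} Q X) l
          = Q (X l - T_lin L lam (Q m0) (Q m1) X l)"
        using T_lin_Q[OF Q QQ l] l by (simp add: compose_def linear_diff[OF lin])
      then show "(norm (X l - T_lin L lam (Q m0) (Q m1) X l))\<^sup>2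
          = (\<lambda>Y. (norm (Y l - T_lin L lam m0 m1 Y l))\<^sup>2) (compose {..<L} Q X)"
        by (simp add: nQ)
    qed
    have "integral\<^sup>L (data_law L a b sg) (\<lambda>X. (norm (X l - T_lin L lam (Q m0) (Q m1) X l))\<^sup>2)
        = integral\<^sup>L (data_law L a b sg) (\<lambda>X. (\<lambda>Y. (norm (Y l - T_lin L lam m0 m1 Y l))\<^sup>2) (compose {..<L} Q X))"
      by (rule arg_cong[OF fe])
    also have "\<dots> = integral\<^sup>L (data_law L a b sg) (\<lambda>Y. (norm (Y l - T_lin L lam m0 m1 Y l))\<^sup>2)"
      by (rule data_sym[OF sg Q QQ Qa Qb b0]) (auto simp: l F_fold intro!: F_measurable)
    finally show ?thesis .
  qed
  then show ?thesis unfolding risk_def by (intro arg_cong2[where f="(*)"] refl sum.cong) auto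
qed

lemma risk_swap_mu: "risk L sg lam a b m0 m1 = risk L sg lam a b m1 m0"
  unfolding risk_def T_lin_def by (simp add: add.commute)

lemma risk_swap_ms: "risk L sg lam a b m0 m1 = risk L sg lam b a m0 m1"
  unfolding risk_def data_law_def mixture_law_def by (simp add: add.commute)

lemma risk_neg2: "risk L sg lam a b m0 (- m1) = risk L sg lam a b m0 m1"
  unfolding risk_def T_lin_def by simp



definition NN :: "nat \<Rightarrow> (nat \<Rightarrow> real^'d) \<Rightarrow> real" where
  "NN L X = (\<Prod>k<L. 1 + norm (X k))"

lemma NN_ge1: "1 \<le> NN L X"
  unfolding NN_def by (intro prod_ge_1) auto

lemma NN_pos: "0 < NN L X"
  using NN_ge1[of L X] by linarith

lemma norm_le_NN: assumes "k < L" shows "norm (X k) \<le> NN L X"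
proof -
  have "NN L X = (1 + norm (X k)) * (\<Prod>j\<in>{..<L} - {k}. 1 + norm (X j))"
    unfolding NN_def using assms by (subst prod.remove[of _ k]) auto
  moreover have "1 \<le> (\<Prod>j\<in>{..<L} - {k}. 1 + norm (X j))" by (intro prod_ge_1) auto
  ultimately have "1 + norm (X k) \<le> NN L X"
    by (metis mult_le_cancel_left1 add_nonneg_nonneg norm_ge_zero zero_le_one order_trans mult.commute
        mult_left_mono mult_1_right)
  then show ?thesis by simp
qed

definition pbv :: "nat \<Rightarrow> ((nat \<Rightarrow> real^'d) \<Rightarrow> 'b::real_normed_vector) \<Rightarrow> bool" where
  "pbv L f \<longleftrightarrow> (\<exists>C p. 0 \<le> C \<and> (\<forall>X. norm (f X) \<le> C * NN L X ^ p))"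

lemma NN_pow_mono: "p \<le> q \<Longrightarrow> NN L X ^ p \<le> NN L X ^ q"
  using NN_ge1 by (intro power_increasing) auto

lemma pbv_comp: "k < L \<Longrightarrow> pbv L (\<lambda>X. X k)"
  unfolding pbv_def by (rule exI[of _ 1], rule exI[of _ 1]) (simp add: norm_le_NN)

lemma pbv_const: "pbv L (\<lambda>X. c)"
  unfolding pbv_def by (rule exI[of _ "norm c"], rule exI[of _ 0]) simp

lemma pbv_add:
  assumes "pbv L f" "pbv L g" shows "pbv L (\<lambda>X. f X + g X)"
proof -
  obtain C p where C: "0 \<le> C" "\<And>X. norm (f X) \<le> C * NN L X ^ p" using assms(1) unfolding pbv_def by blast
  obtain D q where D: "0 \<le> D" "\<And>X. norm (g X) \<le> D * NN L X ^ q" using assms(2) unfolding pbv_def by blast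
  show ?thesis unfolding pbv_def
  proof (intro exI conjI allI)
    fix X
    have "norm (f X + g X) \<le> C * NN L X ^ p + D * NN L X ^ q" using C D norm_triangle_le add_mono by blast
    also have "\<dots> \<le> C * NN L X ^ (p + q) + D * NN L X ^ (p + q)"
      using C(1) D(1) by (intro add_mono mult_left_mono NN_pow_mono) auto
    finally show "norm (f X + g X) \<le> (C + D) * NN L X ^ (p + q)" by (simp add: algebra_simps)
  qed (use C D in auto)
qed

lemma pbv_uminus: "pbv L f \<Longrightarrow> pbv L (\<lambda>X. - f X)"
  unfolding pbv_def by simp

lemma pbv_diff: "pbv L f \<Longrightarrow> pbv L g \<Longrightarrow> pbv L (\<lambda>X. f X - g X)"
  using pbv_add[of L f "\<lambda>X. - g X"] pbv_uminus[of L g] by simp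

lemma pbv_mult_gen:
  assumes "pbv L f" "pbv L g" and H: "\<And>X. norm (h X) \<le> norm (f X) * norm (g X)"
  shows "pbv L h"
proof -
  obtain C p where C: "0 \<le> C" "\<And>X. norm (f X) \<le> C * NN L X ^ p" using assms(1) unfolding pbv_def by blast
  obtain D q where D: "0 \<le> D" "\<And>X. norm (g X) \<le> D * NN L X ^ q" using assms(2) unfolding pbv_def by blast
  show ?thesis unfolding pbv_def
  proof (intro exI conjI allI)
    fix X
    have "norm (h X) \<le> norm (f X) * norm (g X)" by (rule H)
    also have "\<dots> \<le> (C * NN L X ^ p) * (D * NN L X ^ q)"
    proof -
      have "0 \<le> C * NN L X ^ p" using C(1) NN_pos[of L X] by simp
      then show ?thesis using C D by (intro mult_mono) auto
    qed
    finally show "norm (h X) \<le> (C * D) * NN L X ^ (p + q)" by (simp add: algebra_simps power_add)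
  qed (use C D in auto)
qed

lemma pbv_inner: "pbv L f \<Longrightarrow> pbv L g \<Longrightarrow> pbv L (\<lambda>X. f X \<bullet> g X)"
  by (rule pbv_mult_gen[where f=f and g=g]) (auto simp: Cauchy_Schwarz_ineq2)

lemma pbv_scaleR: "pbv L f \<Longrightarrow> pbv L g \<Longrightarrow> pbv L (\<lambda>X. f X *\<^sub>R g X)"
  by (rule pbv_mult_gen[where f=f and g=g]) auto

lemma pbv_mult: "pbv L f \<Longrightarrow> pbv L g \<Longrightarrow> pbv L (\<lambda>X. f X * (g X :: real))"
  by (rule pbv_mult_gen[where f=f and g=g]) (auto simp: abs_mult)

lemma pbv_sum:
  assumes "finite S" "\<And>i. i \<in> S \<Longrightarrow> pbv L (f i)"
  shows "pbv L (\<lambda>X. \<Sum>i\<in>S. f i X)"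
  using assms
proof (induction S rule: finite_induct)
  case empty then show ?case using pbv_const[of L 0] by simp
next
  case (insert x F) then show ?case by (simp add: pbv_add)
qed

lemma integrable_NN:
  fixes a b :: "real^'d"
  assumes sg: "0 < sg"
  shows "integrable (data_law L a b sg) (\<lambda>X. NN L X ^ p)"
proof -
  interpret product_prob_space "\<lambda>_::nat. (mixture_law a b sg :: (real^'d) measure)"
    by (intro product_prob_spaceI prob_mix[OF sg])
  have "integrable (PiM {..<L} (\<lambda>_. mixture_law a b sg)) (\<lambda>X::nat \<Rightarrow> real^'d. \<Prod>k<L. (1 + norm (X k)) ^ p)"
    by (rule product_integrable_prod) (auto intro: mix_poly_integrable[OF sg])
  then show ?thesis by (simp add: data_law_def NN_def prod_power_distrib)
qed

lemma pbv_integrable: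
  fixes f :: "(nat \<Rightarrow> real^'d) \<Rightarrow> 'b::{banach,second_countable_topology}"
  assumes sg: "0 < sg" and pb: "pbv L f" and m: "f \<in> borel_measurable (data_law L a b sg)"
  shows "integrable (data_law L a b sg) f"
proof -
  obtain C p where C: "0 \<le> C" "\<And>X. norm (f X) \<le> C * NN L X ^ p" using pb unfolding pbv_def by blast
  show ?thesis
  proof (rule Bochner_Integration.integrable_bound[OF _ m])
    show "integrable (data_law L a b sg) (\<lambda>X. C * NN L X ^ p)"
      by (intro integrable_mult_right integrable_NN[OF sg])
    show "AE X in data_law L a b sg. norm (f X) \<le> norm (C * NN L X ^ p)"
      using C NN_pos by (intro AE_I2) (auto intro: order_trans[OF C(2)])
  qed
qed



lemma bilinear_expand:
  fixes h :: "'v::euclidean_space \<Rightarrow> 'v \<Rightarrow> 'w::real_vector"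
  assumes "bilinear h"
  shows "h m m = (\<Sum>p\<in>Basis \<times> Basis. ((m \<bullet> fst p) * (m \<bullet> snd p)) *\<^sub>R h (fst p) (snd p))"
proof -
  have "h m m = h (\<Sum>i\<in>Basis. (m \<bullet> i) *\<^sub>R i) (\<Sum>j\<in>Basis. (m \<bullet> j) *\<^sub>R j)"
    by (simp add: euclidean_representation)
  also have "\<dots> = (\<Sum>(i,j)\<in>Basis \<times> Basis. h ((m \<bullet> i) *\<^sub>R i) ((m \<bullet> j) *\<^sub>R j))"
    by (rule bilinear_sum[OF assms])
  also have "\<dots> = (\<Sum>p\<in>Basis \<times> Basis. ((m \<bullet> fst p) * (m \<bullet> snd p)) *\<^sub>R h (fst p) (snd p))"
    by (intro sum.cong) (auto simp: bilinear_lmul[OF assms] bilinear_rmul[OF assms])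
  finally show ?thesis .
qed

lemma inner_diff_self: "(x - y) \<bullet> (x - y) = x \<bullet> x - 2 * (x \<bullet> y) + y \<bullet> (y::'a::real_inner)"
  by (simp add: inner_diff_left inner_diff_right inner_commute)

lemma poly_integral_deriv:
  fixes a :: "'x \<Rightarrow> 'v::euclidean_space" and B :: "'x \<Rightarrow> 'v \<Rightarrow> 'v \<Rightarrow> 'v"
  assumes bil: "\<And>X. bilinear (B X)"
    and Iaa: "integrable M (\<lambda>X. a X \<bullet> a X)"
    and Iaw: "\<And>i j. integrable M (\<lambda>X. a X \<bullet> B X i j)"
    and Iww: "\<And>i j k l. integrable M (\<lambda>X. B X i j \<bullet> B X k l)"
  shows "\<exists>D. ((\<lambda>m. integral\<^sup>L M (\<lambda>X. (norm (a X - B X m m))\<^sup>2)) has_derivative D) (at m0)"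
proof -
  define P where "P = (Basis :: 'v set) \<times> (Basis :: 'v set)"
  define c where "c m p = (m \<bullet> fst p) * (m \<bullet> snd p)" for m :: 'v and p :: "'v \<times> 'v"
  define W where "W X p = B X (fst p) (snd p)" for X p
  define A0 where "A0 = integral\<^sup>L M (\<lambda>X. a X \<bullet> a X)"
  define A where "A p = integral\<^sup>L M (\<lambda>X. a X \<bullet> W X p)" for p
  define C where "C p q = integral\<^sup>L M (\<lambda>X. W X q \<bullet> W X p)" for p q
  have Bexp: "B X m m = (\<Sum>p\<in>P. c m p *\<^sub>R W X p)" for X m
    unfolding P_def c_def W_def by (rule bilinear_expand[OF bil])
  have pt: "(norm (a X - B X m m))\<^sup>2 = a X \<bullet> a X - 2 * (\<Sum>p\<in>P. c m p * (a X \<bullet> W X p))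
      + (\<Sum>p\<in>P. c m p * (\<Sum>q\<in>P. c m q * (W X q \<bullet> W X p)))" for X m
    unfolding power2_norm_eq_inner inner_diff_self Bexp
    by (simp add: inner_sum_left inner_sum_right)
  have hb: "has_bochner_integral M (\<lambda>X. (norm (a X - B X m m))\<^sup>2)
      (A0 - 2 * (\<Sum>p\<in>P. c m p * A p) + (\<Sum>p\<in>P. c m p * (\<Sum>q\<in>P. c m q * C p q)))" for m
    unfolding pt A0_def A_def C_def W_def
    by (intro has_bochner_integral_diff has_bochner_integral_add has_bochner_integral_sum
        has_bochner_integral_mult_right has_bochner_integral_integrable Iaa Iaw Iww)
  have eq: "(\<lambda>m. integral\<^sup>L M (\<lambda>X. (norm (a X - B X m m))\<^sup>2))
      = (\<lambda>m. A0 - 2 * (\<Sum>p\<in>P. c m p * A p) + (\<Sum>p\<in>P. c m p * (\<Sum>q\<in>P. c m q * C p q)))"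
    using hb by (auto intro!: has_bochner_integral_integral_eq)
  have fP: "finite P" unfolding P_def by simp
  show ?thesis unfolding eq c_def differentiable_def[symmetric]
    using fP by (intro differentiable_add differentiable_diff differentiable_mult differentiable_sum differentiable_const
      differentiable_inner differentiable_ident ballI)
qed



lemma comp_meas:
  fixes a b :: "real^'d"
  assumes "k < L"
  shows "(\<lambda>X. X k) \<in> borel_measurable (data_law L a b sg)"
  using measurable_component_singleton[of k "{..<L}" "\<lambda>_. mixture_law a b sg"] assms
  by (simp add: data_law_def measurable_cong_sets[OF refl sets_mix])

definition aV :: "nat \<Rightarrow> real \<Rightarrow> nat \<Rightarrow> real^'d \<Rightarrow> (nat \<Rightarrow> real^'d) \<Rightarrow> real^'d" where
  "aV L lam l m1 X = X l - (2 / real L) *\<^sub>R (\<Sum>k<L. (lam * ((X l \<bullet> m1) * (m1 \<bullet> X k))) *\<^sub>R X k)"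

definition BV :: "nat \<Rightarrow> real \<Rightarrow> nat \<Rightarrow> (nat \<Rightarrow> real^'d) \<Rightarrow> real^'d \<Rightarrow> real^'d \<Rightarrow> real^'d" where
  "BV L lam l X u v = (2 / real L) *\<^sub>R (\<Sum>k<L. (lam * ((X l \<bullet> u) * (v \<bullet> X k))) *\<^sub>R X k)"

lemma T_split: "X l - T_lin L lam m m1 X l = aV L lam l m1 X - BV L lam l X m m"
  unfolding T_lin_def aV_def BV_def
  by (simp add: distrib_left scaleR_add_left sum.distrib scaleR_add_right algebra_simps)

lemma BV_bilinear: "bilinear (BV L lam l X)"
  unfolding bilinear_def BV_def
  by (auto intro!: linearI simp: inner_add_left inner_add_right algebra_simps scaleR_add_left sum.distrib
      scaleR_sum_right add_divide_distrib)

lemma pbv_aV: "l < L \<Longrightarrow> pbv L (\<lambda>X. aV L lam l m1 X)"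
  unfolding aV_def
  by (intro pbv_diff pbv_scaleR pbv_sum pbv_mult pbv_inner pbv_comp pbv_const) auto

lemma pbv_BV: "l < L \<Longrightarrow> pbv L (\<lambda>X. BV L lam l X u v)"
  unfolding BV_def
  by (intro pbv_diff pbv_scaleR pbv_sum pbv_mult pbv_inner pbv_comp pbv_const) auto

lemma meas_aV:
  fixes a b :: "real^'d"
  shows "l < L \<Longrightarrow> (\<lambda>X. aV L lam l m1 X) \<in> borel_measurable (data_law L a b sg)"
  unfolding aV_def
  by (intro borel_measurable_inner borel_measurable_diff borel_measurable_scaleR borel_measurable_sum
      borel_measurable_times borel_measurable_add borel_measurable_const comp_meas) auto

lemma meas_BV:
  fixes a b :: "real^'d"
  shows "l < L \<Longrightarrow> (\<lambda>X. BV L lam l X u v) \<in> borel_measurable (data_law L a b sg)"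
  unfolding BV_def
  by (intro borel_measurable_inner borel_measurable_diff borel_measurable_scaleR borel_measurable_sum
      borel_measurable_times borel_measurable_add borel_measurable_const comp_meas) auto

lemma risk_differentiable1:
  fixes a b :: "real^'d"
  assumes sg: "0 < sg"
  shows "(\<lambda>m. risk L sg lam a b m m1) differentiable (at m0)"
proof -
  have each: "(\<lambda>m. integral\<^sup>L (data_law L a b sg) (\<lambda>X. (norm (X l - T_lin L lam m m1 X l))\<^sup>2)) differentiable (at m0)"
    if l: "l < L" for l
  proof -
    have "\<exists>D. ((\<lambda>m. integral\<^sup>L (data_law L a b sg) (\<lambda>X. (norm (aV L lam l m1 X - BV L lam l X m m))\<^sup>2)) has_derivative D) (at m0)"
    proof (rule poly_integral_deriv[OF BV_bilinear])
      show "integrable (data_law L a b sg) (\<lambda>X. aV L lam l m1 X \<bullet> aV L lam l m1 X)"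
        using l by (intro pbv_integrable[OF sg] pbv_inner pbv_aV borel_measurable_inner meas_aV)
      show "integrable (data_law L a b sg) (\<lambda>X. aV L lam l m1 X \<bullet> BV L lam l X i j)" for i j
        using l by (intro pbv_integrable[OF sg] pbv_inner pbv_aV pbv_BV borel_measurable_inner meas_aV meas_BV)
      show "integrable (data_law L a b sg) (\<lambda>X. BV L lam l X i j \<bullet> BV L lam l X k k')" for i j k k'
        using l by (intro pbv_integrable[OF sg] pbv_inner pbv_BV borel_measurable_inner meas_BV)
    qed
    then show ?thesis unfolding differentiable_def T_split .
  qed
  show ?thesis unfolding risk_def
    by (intro differentiable_mult differentiable_const differentiable_sum ballI each) auto
qed

lemma riesz_deriv:
  fixes f :: "'v::euclidean_space \<Rightarrow> real"
  assumes "f differentiable (at x)"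
  shows "\<exists>g. (f has_derivative (\<lambda>h. g \<bullet> h)) (at x)"
proof -
  obtain D where D: "(f has_derivative D) (at x)" using assms unfolding differentiable_def by blast
  have lin: "linear D" using has_derivative_bounded_linear[OF D] bounded_linear.linear by blast
  define g where "g = (\<Sum>b\<in>Basis. D b *\<^sub>R b)"
  have "D h = g \<bullet> h" for h
  proof -
    have "D h = D (\<Sum>b\<in>Basis. (h \<bullet> b) *\<^sub>R b)" by (simp add: euclidean_representation)
    also have "\<dots> = (\<Sum>b\<in>Basis. (h \<bullet> b) * D b)" by (simp add: linear_sum[OF lin] linear_scale[OF lin])
    also have "\<dots> = g \<bullet> h" unfolding g_def inner_sum_left inner_scaleR_left
      by (simp add: inner_commute mult.commute)
    finally show ?thesis .
  qed
  then have "D = (\<lambda>h. g \<bullet> h)" by auto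
  then show ?thesis using D by auto
qed

lemma grad_unique:
  fixes f :: "'v::euclidean_space \<Rightarrow> real"
  assumes "(f has_derivative (\<lambda>h. g \<bullet> h)) (at x)"
  shows "(THE g. (f has_derivative (\<lambda>h. g \<bullet> h)) (at x)) = g"
proof (rule the_equality)
  show "(f has_derivative (\<lambda>h. g \<bullet> h)) (at x)" by (rule assms)
next
  fix g' assume "(f has_derivative (\<lambda>h. g' \<bullet> h)) (at x)"
  then have "(\<lambda>h. g' \<bullet> h) = (\<lambda>h. g \<bullet> h)" using has_derivative_unique assms by blast
  then have "g' \<bullet> (g' - g) = g \<bullet> (g' - g)" by metis
  then have "(g' - g) \<bullet> (g' - g) = 0" by (simp add: inner_diff_left)
  then show "g' = g" by simp
qed

lemma grad0_prop:
  fixes a b :: "real^'d"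
  assumes sg: "0 < sg"
  shows "((\<lambda>m. risk L sg lam a b m m1) has_derivative (\<lambda>h. grad0 L sg lam a b m0 m1 \<bullet> h)) (at m0)"
proof -
  obtain g where g: "((\<lambda>m. risk L sg lam a b m m1) has_derivative (\<lambda>h. g \<bullet> h)) (at m0)"
    using riesz_deriv[OF risk_differentiable1[OF sg]] by blast
  then show ?thesis unfolding grad0_def using grad_unique[OF g] by simp
qed

lemma grad1_prop:
  fixes a b :: "real^'d"
  assumes sg: "0 < sg"
  shows "((\<lambda>m. risk L sg lam a b m0 m) has_derivative (\<lambda>h. grad1 L sg lam a b m0 m1 \<bullet> h)) (at m1)"
proof -
  have e: "(\<lambda>m. risk L sg lam a b m0 m) = (\<lambda>m. risk L sg lam a b m m0)"
    using risk_swap_mu by metis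
  obtain g where g: "((\<lambda>m. risk L sg lam a b m0 m) has_derivative (\<lambda>h. g \<bullet> h)) (at m1)"
    using riesz_deriv[OF risk_differentiable1[OF sg]] unfolding e by blast
  then show ?thesis unfolding grad1_def using grad_unique[OF g] by simp
qed



definition reflQ :: "real^'d \<Rightarrow> real^'d \<Rightarrow> real^'d \<Rightarrow> real^'d" where
  "reflQ a u x = (let e = (1 / norm (u - (u \<bullet> a) *\<^sub>R a)) *\<^sub>R (u - (u \<bullet> a) *\<^sub>R a)
                  in 2 *\<^sub>R ((x \<bullet> a) *\<^sub>R a + (x \<bullet> e) *\<^sub>R e) - x)"

lemma reflQ_props:
  fixes a u :: "real^'d"
  assumes na: "norm a = 1"
  shows "orthogonal_transformation (reflQ a u)"
    and "\<And>x. reflQ a u (reflQ a u x) = x"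
    and "\<And>x y. reflQ a u x \<bullet> y = x \<bullet> reflQ a u y"
    and "reflQ a u a = a"
    and "reflQ a u u = u"
    and "\<And>z. z \<bullet> a = 0 \<Longrightarrow> z \<bullet> u = 0 \<Longrightarrow> reflQ a u z = - z"
proof -
  define u' where "u' = u - (u \<bullet> a) *\<^sub>R a"
  define e where "e = (1 / norm u') *\<^sub>R u'"
  have aa: "a \<bullet> a = 1" using na by (simp add: power2_norm_eq_inner[symmetric])
  have Qdef: "reflQ a u x = 2 *\<^sub>R ((x \<bullet> a) *\<^sub>R a + (x \<bullet> e) *\<^sub>R e) - x" for x
    by (simp add: reflQ_def e_def u'_def Let_def)
  have u'a: "u' \<bullet> a = 0" by (simp add: u'_def inner_diff_left aa)
  have ea: "e \<bullet> a = 0" by (simp add: e_def u'a)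
  have ee: "(x \<bullet> e) * (e \<bullet> e) = x \<bullet> e" for x
  proof (cases "u' = 0")
    case True then show ?thesis by (simp add: e_def)
  next
    case False
    then have "e \<bullet> e = 1" by (simp add: e_def power2_norm_eq_inner[symmetric] divide_simps)
    then show ?thesis by simp
  qed
  define P where "P x = (x \<bullet> a) *\<^sub>R a + (x \<bullet> e) *\<^sub>R e" for x
  have ae: "a \<bullet> e = 0" using ea by (simp add: inner_commute)
  have PP: "P (P x) = P x" for x
  proof -
    have 1: "P x \<bullet> a = x \<bullet> a" by (simp add: P_def inner_add_left aa ea)
    have 2: "P x \<bullet> e = x \<bullet> e" using ee[of x] by (simp add: P_def inner_add_left ae)
    show ?thesis using P_def[of "P x"] 1 2 by (simp add: P_def[of x])
  qed
  have linP: "linear P" by (auto intro!: linearI simp: P_def inner_add_left algebra_simps)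
  have Q: "reflQ a u x = 2 *\<^sub>R P x - x" for x by (simp add: Qdef P_def)
  show QQ: "reflQ a u (reflQ a u x) = x" for x
  proof -
    have a1: "P (reflQ a u x) = P x"
      by (simp only: Q linear_diff[OF linP] linear_scale[OF linP] linear_add[OF linP] PP scaleR_2 add_diff_cancel)
    have "reflQ a u (reflQ a u x) = 2 *\<^sub>R P (reflQ a u x) - reflQ a u x" by (rule Q)
    also have "\<dots> = 2 *\<^sub>R P x - (2 *\<^sub>R P x - x)" by (subst a1, subst Q[of x], rule refl)
    also have "\<dots> = x" by (simp only: diff_diff_eq2 add_diff_cancel_left')
    finally show ?thesis .
  qed
  show sy: "reflQ a u x \<bullet> y = x \<bullet> reflQ a u y" for x y
    by (simp add: Q P_def inner_diff_left inner_diff_right inner_add_left inner_add_right inner_commute)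
  have linQ: "linear (reflQ a u)"
    unfolding Q[abs_def] using linP by (auto intro!: linearI simp: linear_add linear_scale algebra_simps)
  show "orthogonal_transformation (reflQ a u)"
    unfolding orthogonal_transformation_def using linQ sy QQ by metis
  show "reflQ a u a = a" by (simp add: Q P_def aa ae scaleR_2)
  have ue: "(u \<bullet> e) *\<^sub>R e = u'"
  proof (cases "u' = 0")
    case True then show ?thesis by (simp add: e_def)
  next
    case False
    have "u \<bullet> u' = u' \<bullet> u'" by (simp add: u'_def inner_diff_right inner_diff_left inner_commute aa)
    then have "u \<bullet> e = norm u'" by (simp add: e_def power2_norm_eq_inner[symmetric] power2_eq_square)
    then show ?thesis using False by (simp add: e_def)
  qed
  have Pu: "P u = u" by (simp add: P_def ue u'_def)
  show "reflQ a u u = u" by (simp only: Q Pu scaleR_2 add_diff_cancel)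
  fix z assume za: "z \<bullet> a = 0" and zu: "z \<bullet> u = 0"
  have "z \<bullet> e = 0" by (simp add: e_def u'_def inner_diff_right za zu)
  then show "reflQ a u z = - z" by (simp add: Q P_def za)
qed

lemma inner_fun_eq: "(\<lambda>h. g \<bullet> h) = (\<lambda>h. g' \<bullet> h) \<Longrightarrow> g = (g'::'a::real_inner)"
proof -
  assume "(\<lambda>h. g \<bullet> h) = (\<lambda>h. g' \<bullet> h)"
  then have "g \<bullet> (g - g') = g' \<bullet> (g - g')" by metis
  then have "(g - g') \<bullet> (g - g') = 0" by (simp add: inner_diff_left)
  then show ?thesis by simp
qed

lemma grad_fixed:
  fixes f :: "real^'d \<Rightarrow> real"
  assumes D: "(f has_derivative (\<lambda>h. g \<bullet> h)) (at x)"
    and Q: "orthogonal_transformation Q" and sy: "\<And>x y. Q x \<bullet> y = x \<bullet> Q y"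
    and Qx: "Q x = x" and inv: "\<And>m. f (Q m) = f m"
  shows "Q g = g"
proof -
  have linQ: "linear Q" using Q by (simp add: orthogonal_transformation)
  have "(Q has_derivative Q) (at x)" using linQ by (rule linear_imp_has_derivative)
  from has_derivative_compose[OF this, of f "\<lambda>h. g \<bullet> h"] D Qx
  have "((\<lambda>m. f (Q m)) has_derivative (\<lambda>h. g \<bullet> Q h)) (at x)" by simp
  then have "(f has_derivative (\<lambda>h. Q g \<bullet> h)) (at x)" by (simp add: inv sy)
  then have "(\<lambda>h. g \<bullet> h) = (\<lambda>h. Q g \<bullet> h)" using has_derivative_unique D by blast
  then show ?thesis using inner_fun_eq by metis
qed

lemma sphere_step_props:
  fixes mu g :: "real^'d"
  assumes "norm mu = 1"
  shows "norm (sphere_step gamma mu g) = 1"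
    and "\<And>z. z \<bullet> mu = 0 \<Longrightarrow> z \<bullet> g = 0 \<Longrightarrow> z \<bullet> sphere_step gamma mu g = 0"
proof -
  have mm: "mu \<bullet> mu = 1" using assms by (simp add: power2_norm_eq_inner[symmetric])
  define v where "v = mu - gamma *\<^sub>R (g - (mu \<bullet> g) *\<^sub>R mu)"
  have S: "sphere_step gamma mu g = (1 / norm v) *\<^sub>R v" by (simp add: sphere_step_def v_def Let_def)
  have "v \<bullet> mu = 1" by (simp add: v_def inner_diff_left inner_diff_right mm inner_commute)
  then have "v \<noteq> 0" by auto
  then show "norm (sphere_step gamma mu g) = 1" by (simp add: S)
  fix z assume "z \<bullet> mu = 0" "z \<bullet> g = 0"
  then show "z \<bullet> sphere_step gamma mu g = 0" by (simp add: S v_def inner_diff_right)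
qed

lemma risk_neg1: "risk L sg lam a b (- m0) m1 = risk L sg lam a b m0 m1"
  by (metis risk_swap_mu risk_neg2)



lemma sphere_step_orth:
  fixes mu nu g h :: "real^'d"
  assumes "mu \<bullet> nu = 0" "mu \<bullet> h = 0" "g \<bullet> nu = 0" "g \<bullet> h = 0"
  shows "sphere_step gamma mu g \<bullet> sphere_step gamma nu h = 0"
proof -
  define v where "v = mu - gamma *\<^sub>R (g - (mu \<bullet> g) *\<^sub>R mu)"
  define w where "w = nu - gamma *\<^sub>R (h - (nu \<bullet> h) *\<^sub>R nu)"
  have S: "sphere_step gamma mu g = (1 / norm v) *\<^sub>R v" "sphere_step gamma nu h = (1 / norm w) *\<^sub>R w"
    by (simp_all add: sphere_step_def v_def w_def Let_def)
  have "v \<bullet> w = 0"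
    using assms by (simp add: v_def w_def inner_diff_left inner_diff_right)
  then show ?thesis by (simp add: S)
qed

theorem lemma4:
  fixes ms0 ms1 mu0 mu1 :: "real^'d" and L :: nat and sg lam gamma :: real
  assumes "CARD('d) \<ge> 2" and "L \<ge> 1" and "sg > 0" and "lam > 0" and "gamma > 0"
    and "norm ms0 = 1" and "norm ms1 = 1" and "ms0 \<bullet> ms1 = 0"
    and "(mu0, mu1) \<in> manifoldM ms0 ms1"
  shows "pgd_step L sg lam gamma ms0 ms1 (mu0, mu1) \<in> manifoldM ms0 ms1"
proof -
  have sg: "0 < sg" using assms(3) by simp
  from assms(9) have n0: "norm mu0 = 1" and n1: "norm mu1 = 1" and o10: "ms1 \<bullet> mu0 = 0"
    and o01: "ms0 \<bullet> mu1 = 0" and o00: "mu0 \<bullet> mu1 = 0"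
    by (auto simp: manifoldM_def)
  have o01': "ms1 \<bullet> ms0 = 0" using assms(8) by (simp add: inner_commute)
  define G0 where "G0 = grad0 L sg lam ms0 ms1 mu0 mu1"
  define G1 where "G1 = grad1 L sg lam ms0 ms1 mu0 mu1"
  note P0 = reflQ_props[OF assms(6), where u=mu0]
  note P1 = reflQ_props[OF assms(7), where u=mu1]
  have ms0nz: "ms0 \<noteq> 0" and ms1nz: "ms1 \<noteq> 0" using assms(6,7) by auto
  have Q0ms1: "(reflQ ms0 mu0) ms1 = - ms1" by (rule P0(6)) (simp_all add: o01' o10)
  have Q0mu1: "(reflQ ms0 mu0) mu1 = - mu1" by (rule P0(6)) (simp_all add: inner_commute o01 o00)
  have Q1ms0: "(reflQ ms1 mu1) ms0 = - ms0" by (rule P1(6)) (simp_all add: assms(8) o01)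
  have Q1mu0: "(reflQ ms1 mu1) mu0 = - mu0" by (rule P1(6)) (simp_all add: inner_commute o10 o00)
  have inv0: "risk L sg lam ms0 ms1 ((reflQ ms0 mu0) m) mu1 = risk L sg lam ms0 ms1 m mu1" for m
  proof -
    have "risk L sg lam ms0 ms1 ((reflQ ms0 mu0) m) mu1 = risk L sg lam ms0 ms1 ((reflQ ms0 mu0) m) (- (reflQ ms0 mu0) mu1)"
      by (simp add: Q0mu1)
    also have "\<dots> = risk L sg lam ms0 ms1 ((reflQ ms0 mu0) m) ((reflQ ms0 mu0) mu1)" by (rule risk_neg2)
    also have "\<dots> = risk L sg lam ms0 ms1 m mu1"
      by (rule risk_Q[OF sg P0(1) P0(2) P0(4) Q0ms1 ms1nz])
    finally show ?thesis .
  qed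
  have inv1: "risk L sg lam ms0 ms1 mu0 ((reflQ ms1 mu1) m) = risk L sg lam ms0 ms1 mu0 m" for m
  proof -
    have "risk L sg lam ms0 ms1 mu0 ((reflQ ms1 mu1) m) = risk L sg lam ms0 ms1 (- (reflQ ms1 mu1) mu0) ((reflQ ms1 mu1) m)"
      by (simp add: Q1mu0)
    also have "\<dots> = risk L sg lam ms0 ms1 ((reflQ ms1 mu1) mu0) ((reflQ ms1 mu1) m)" by (rule risk_neg1)
    also have "\<dots> = risk L sg lam ms1 ms0 ((reflQ ms1 mu1) mu0) ((reflQ ms1 mu1) m)" by (rule risk_swap_ms)
    also have "\<dots> = risk L sg lam ms1 ms0 mu0 m"
      by (rule risk_Q[OF sg P1(1) P1(2) P1(4) Q1ms0 ms0nz])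
    also have "\<dots> = risk L sg lam ms0 ms1 mu0 m" by (rule risk_swap_ms[symmetric])
    finally show ?thesis .
  qed
  have G0fix: "(reflQ ms0 mu0) G0 = G0"
    unfolding G0_def by (rule grad_fixed[OF grad0_prop[OF sg] P0(1) P0(3) P0(5) inv0])
  have G1fix: "(reflQ ms1 mu1) G1 = G1"
    unfolding G1_def by (rule grad_fixed[OF grad1_prop[OF sg] P1(1) P1(3) P1(5) inv1])
  have anti: "G \<bullet> z = 0" if "Q G = G" "Q z = - z" "\<And>x y. Q x \<bullet> y = x \<bullet> Q y" for Q G z
  proof -
    have "G \<bullet> z = Q G \<bullet> z" using that(1) by simp
    also have "\<dots> = G \<bullet> Q z" by (rule that(3))
    also have "\<dots> = - (G \<bullet> z)" using that(2) by simp
    finally show ?thesis by simp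
  qed
  have g0ms1: "G0 \<bullet> ms1 = 0" by (rule anti[OF G0fix Q0ms1 P0(3)])
  have g0mu1: "G0 \<bullet> mu1 = 0" by (rule anti[OF G0fix Q0mu1 P0(3)])
  have g1ms0: "G1 \<bullet> ms0 = 0" by (rule anti[OF G1fix Q1ms0 P1(3)])
  have g1mu0: "G1 \<bullet> mu0 = 0" by (rule anti[OF G1fix Q1mu0 P1(3)])
  have Q0G1: "(reflQ ms0 mu0) G1 = - G1" by (rule P0(6)) (simp_all add: g1ms0 g1mu0)
  have g0g1: "G0 \<bullet> G1 = 0" by (rule anti[OF G0fix Q0G1 P0(3)])
  have s0: "pgd_step L sg lam gamma ms0 ms1 (mu0, mu1) = (sphere_step gamma mu0 G0, sphere_step gamma mu1 G1)"
    by (simp add: pgd_step_def G0_def G1_def)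
  have "norm (sphere_step gamma mu0 G0) = 1" by (rule sphere_step_props(1)[OF n0])
  moreover have "norm (sphere_step gamma mu1 G1) = 1" by (rule sphere_step_props(1)[OF n1])
  moreover have "ms1 \<bullet> sphere_step gamma mu0 G0 = 0"
    by (rule sphere_step_props(2)[OF n0]) (simp_all add: o10 g0ms1 inner_commute)
  moreover have "ms0 \<bullet> sphere_step gamma mu1 G1 = 0"
    by (rule sphere_step_props(2)[OF n1]) (simp_all add: o01 g1ms0 inner_commute)
  moreover have "sphere_step gamma mu0 G0 \<bullet> sphere_step gamma mu1 G1 = 0"
    by (rule sphere_step_orth) (simp_all add: o00 g0mu1 g0g1 inner_commute g1mu0)
  ultimately show ?thesis unfolding s0 manifoldM_def by simp
qed


end
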